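(* Let $\kappa\ge2$, $n\ge1$ be integers and $0<\epsilon<1$. Let $\check q$ be given by $\check q_i=0$ for $0\le i<2^{\kappa-1}$ and $\check q_i=2^{1-\kappa}$ for $2^{\kappa-1}\le i\le2^\kappa-1$. Let $\mathcal{C}_\rho$ be the set of $q\in\mathbb{R}^{2^\kappa}$ with $q_0=0$, $q_i\ge0$ for all $i$, $\sum_iq_i=1$, and $\sum_{i=1}^{2^\kappa-1}\big(q_i-\tfrac{1}{2^\kappa-1}\big)^2=\frac{2^{\kappa-1}-1}{(2^\kappa-2^{\kappa-1})(2^\kappa-1)}.$ Then $\check q\in\mathcal{C}_\rho$ and $\lambda(n,\epsilon,\check q)\le\lambda(n,\epsilon,q)$ for all $q\in\mathcal{C}_\rho$.
   Context: $W=\mathbb{F}_2^\kappa$; $\nu(i)\in W$ is the binary expansion of $i\in\{0,\dots,2^\kappa-1\}$; vectors $q$ are indexed $q_0,\dots,q_{2^\kappa-1}$. For a subspace $S\subseteq W$, $\zeta(S,q)=\sum_{i:\nu(i)\in S}q_i$; $\Xi(W,\kappa-1)$ is the set of $(\kappa-1)$-dimensional subspaces of $W$. For real $q$ define $\lambda(n,\epsilon,q)=(2-\epsilon)^n2^{-\kappa}\Big(1+\sum_{S\in\Xi(W,\kappa-1)}\big(\tfrac{\epsilon}{2-\epsilon}\big)^{n(1-\zeta(S,q))}\Big)-1$ (the $\chi^2$ divergence between $p_{MZ}$ and $p_Mp_Z$ for the coset code over a binary erasure channel with erasure probability $\epsilon$, when $q$ is a generator matrix's column-distribution vector). The vector $\check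 q$ (the first subspace exclusion code) puts equal weight on all vectors outside the $(\kappa-1)$-dimensional subspace $\{\nu(i):i<2^{\kappa-1}\}$. *)

theory Defs
  imports "HOL-Analysis.Analysis"
begin

text \<open>Vectors of W = F_2^kappa are represented as subsets of {0..<kappa}
  (the support of the 0/1 vector); vector addition is symmetric difference.\<close>

definition Wsp :: "nat \<Rightarrow> nat set set" where
  "Wsp \<kappa> = Pow {0..<\<kappa>}"

definition vadd :: "nat set \<Rightarrow> nat set \<Rightarrow> nat set" where
  "vadd x y = (x - y) \<union> (y - x)"

definition nu :: "nat \<Rightarrow> nat set" where
  "nu i = {j. bit i j}"

definition vsum :: "nat set set \<Rightarrow> nat set" where
  "vsum T = {j. odd (card {t\<in>T. j \<in> t})}"

definition F2_span :: "nat set set \<Rightarrow> nat set set" where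
  "F2_span B = {vsum T | T. T \<subseteq> B}"

definition F2_indep :: "nat set set \<Rightarrow> bool" where
  "F2_indep B \<longleftrightarrow> finite B \<and> (\<forall>T\<subseteq>B. T \<noteq> {} \<longrightarrow> vsum T \<noteq> {})"

definition is_subspace :: "nat \<Rightarrow> nat set set \<Rightarrow> bool" where
  "is_subspace \<kappa> S \<longleftrightarrow> S \<subseteq> Wsp \<kappa> \<and> {} \<in> S \<and> (\<forall>x\<in>S. \<forall>y\<in>S. vadd x y \<in> S)"

definition Xi :: "nat \<Rightarrow> nat \<Rightarrow> nat set set set" where
  "Xi \<kappa> d = {S. is_subspace \<kappa> S \<and>
       (\<exists>B. B \<subseteq> S \<and> F2_indep B \<and> card B = d \<and> F2_span B = S)}"

definition zeta :: "nat \<Rightarrow> nat set set \<Rightarrow> (nat \<Rightarrow> real) \<Rightarrow> real" where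
  "zeta \<kappa> S q = (\<Sum>i\<in>{i. i < 2^\<kappa> \<and> nu i \<in> S}. q i)"

definition lambda_chi :: "nat \<Rightarrow> nat \<Rightarrow> real \<Rightarrow> (nat \<Rightarrow> real) \<Rightarrow> real" where
  "lambda_chi \<kappa> n \<epsilon> q =
     (2 - \<epsilon>) ^ n * 2 powi (- int \<kappa>) *
       (1 + (\<Sum>S\<in>Xi \<kappa> (\<kappa> - 1). (\<epsilon> / (2 - \<epsilon>)) powr (real n * (1 - zeta \<kappa> S q)))) - 1"

definition qcheck :: "nat \<Rightarrow> nat \<Rightarrow> real" where
  "qcheck \<kappa> i = (if i < 2^(\<kappa>-1) \<or> i \<ge> 2^\<kappa> then 0 else 2 powi (1 - int \<kappa>))"

text \<open>Vectors q in R^(2^kappa) are functions nat => real, only indices < 2^kappa matter.\<close>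
definition C_rho :: "nat \<Rightarrow> (nat \<Rightarrow> real) set" where
  "C_rho \<kappa> = {q. q 0 = 0 \<and> (\<forall>i<2^\<kappa>. q i \<ge> 0) \<and> (\<Sum>i<2^\<kappa>. q i) = 1 \<and>
      (\<Sum>i\<in>{1..<2^\<kappa>}. (q i - 1 / (2^\<kappa> - 1))^2) =
        (2^(\<kappa>-1) - 1) / ((2^\<kappa> - 2^(\<kappa>-1)) * (2^\<kappa> - 1))}"

end

theory Submission
  imports Defs
begin


lemma g_nonneg: assumes "u \<ge> (0::real)" shows "exp u * (u^2 - 2*u + 2) - 2 \<ge> 0"
proof -
  have "exp 0 * (0^2 - 2*0 + 2) - 2 \<le> exp u * (u^2 - 2*u + 2) - (2::real)"
  proof (rule DERIV_nonneg_imp_nondecreasing[OF assms])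
    fix x :: real assume "0 \<le> x" "x \<le> u"
    have "((\<lambda>u. exp u * (u^2 - 2*u + 2) - 2) has_real_derivative exp x * (x^2 - 2*x + 2) + exp x * (2*x - 2)) (at x)"
      by (auto intro!: derivative_eq_intros)
    moreover have "exp x * (x^2 - 2*x + 2) + exp x * (2*x - 2) = exp x * x^2"
      by (simp add: algebra_simps power2_eq_square)
    ultimately show "\<exists>y. ((\<lambda>u. exp u * (u^2 - 2*u + 2) - 2) has_real_derivative y) (at x) \<and> y \<ge> 0"
      by auto
  qed
  then show ?thesis by simp
qed

definition chf :: "real \<Rightarrow> real" where "chf u = (u * exp u - exp u + 1) / u^2"

lemma chf_mono: assumes "0 < u" "u \<le> v" shows "chf u \<le> chf v"
proof (rule DERIV_nonneg_imp_nondecreasing[OF assms(2)])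
  fix x :: real assume x: "u \<le> x" "x \<le> v"
  hence xp: "x > 0" using assms by simp
  have "(chf has_real_derivative ((1 * exp x + x * exp x - exp x) * x^2 - (x * exp x - exp x + 1) * (2 * x)) / (x^2 * x^2)) (at x)"
    unfolding chf_def[abs_def] using xp by (auto intro!: derivative_eq_intros)
  moreover have "((1 * exp x + x * exp x - exp x) * x^2 - (x * exp x - exp x + 1) * (2 * x)) / (x^2 * x^2)
     = (exp x * (x^2 - 2*x + 2) - 2) / x^3"
    using xp by (simp add: field_simps power2_eq_square power3_eq_cube)
  moreover have "(exp x * (x^2 - 2*x + 2) - 2) / x^3 \<ge> 0" using g_nonneg[of x] xp by simp
  ultimately show "\<exists>y. (chf has_real_derivative y) (at x) \<and> y \<ge> 0" by auto
qed


lemma key_exp: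
  fixes s x :: real assumes s: "s > 0" and x: "x \<ge> 0"
  shows "exp (s*x) \<ge> 1 + (2*exp s - 2 - s*exp s) * x + (s*exp s - exp s + 1) * x^2"
proof (cases "x = 0")
  case True then show ?thesis by simp
next
  case False
  hence xp: "x > 0" using x by simp
  define phi where "phi = (\<lambda>x. (exp (s*x) - 1) / x)"
  define phi' where "phi' = (\<lambda>x. s^2 * chf (s*x))"
  have D: "(phi has_real_derivative phi' y) (at y)" if "y \<in> {0<..}" for y
  proof -
    from that have yp: "y > 0" by simp
    have "(phi has_real_derivative ((exp (s*y) * (0 * y + s * 1)) * y - (exp (s*y) - 1) * 1) / (y * y)) (at y)"
      unfolding phi_def using yp by (auto intro!: derivative_eq_intros)
    moreover have "((exp (s*y) * (0 * y + s * 1)) * y - (exp (s*y) - 1) * 1) / (y * y) = phi' y"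
      unfolding phi'_def chf_def using yp s by (simp add: field_simps power2_eq_square)
    ultimately show ?thesis by simp
  qed
  have cv: "convex_on {0<..} phi"
  proof (rule convex_on_realI[where f'=phi'])
    show "connected {0::real<..}" by simp
    show "(phi has_real_derivative phi' y) (at y)" if "y \<in> {0<..}" for y using D that .
    show "phi' y \<le> phi' z" if "y \<in> {0<..}" "z \<in> {0<..}" "y \<le> z" for y z
      unfolding phi'_def using that s chf_mono[of "s*y" "s*z"]
      by (simp add: mult_left_mono)
  qed
  have D1: "(phi has_real_derivative phi' 1) (at 1 within {0<..})"
    using D[of 1] by (simp add: has_field_derivative_at_within)
  have "phi x - phi 1 \<ge> phi' 1 * (x - 1)"
    by (rule convex_on_imp_above_tangent[OF cv _ _ _ D1]) (use xp in \<open>auto simp: interior_open\<close>)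
  note tg = this
  have "(exp (s*x) - 1) / x - (exp s - 1) \<ge> (s * exp s - exp s + 1) * (x - 1)"
  proof -
    have "phi' 1 = s * exp s - exp s + 1" unfolding phi'_def chf_def using s by (simp add: field_simps power2_eq_square)
    moreover have "phi 1 = exp s - 1" unfolding phi_def by simp
    ultimately show ?thesis using tg unfolding phi_def by simp
  qed
  hence "exp (s*x) - 1 - x * (exp s - 1) \<ge> x * ((s * exp s - exp s + 1) * (x - 1))"
    using xp by (simp add: field_simps)
  then show ?thesis by (simp add: algebra_simps power2_eq_square)
qed



lemma nu_sub: assumes "i < 2^k" shows "nu i \<subseteq> {0..<k}"
proof
  fix j assume "j \<in> nu i"
  hence "bit i j" by (simp add: nu_def)
  show "j \<in> {0..<k}"
  proof (rule ccontr)
    assume "j \<notin> {0..<k}"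
    hence "k \<le> j" by simp
    hence "i < 2^j" using assms by (meson less_le_trans one_le_numeral power_increasing)
    hence "i div 2^j = 0" by simp
    thus False using \<open>bit i j\<close> by (simp add: bit_iff_odd)
  qed
qed

lemma nu_inj: "inj nu"
  by (rule injI) (simp add: nu_def bit_eq_iff set_eq_iff)

lemma nu_empty: "nu i = {} \<longleftrightarrow> i = 0"
  by (auto simp: nu_def bit_eq_iff[of i 0])

lemma nu_top: assumes "i < 2^k" "k \<ge> 1" shows "(k - 1 \<in> nu i) \<longleftrightarrow> 2^(k-1) \<le> i"
proof -
  have k: "(2::nat)^k = 2 * 2^(k-1)" using assms(2) by (metis Suc_diff_1 less_le_trans zero_less_one power_Suc)
  have "i div 2^(k-1) < 2" using assms(1) k by (simp add: div_less_iff_less_mult mult.commute)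
  hence "i div 2^(k-1) = 0 \<or> i div 2^(k-1) = 1" by linarith
  hence "odd (i div 2^(k-1)) \<longleftrightarrow> 2^(k-1) \<le> i"
  proof
    assume "i div 2^(k-1) = 0" thus ?thesis by (simp add: div_eq_0_iff)
  next
    assume "i div 2^(k-1) = 1" thus ?thesis by (metis div_greater_zero_iff odd_one zero_less_one)
  qed
  thus ?thesis by (simp add: nu_def bit_iff_odd)
qed

lemma nu_bij: "bij_betw nu {..<2^k} (Pow {0..<k})"
proof -
  have "inj_on nu {..<2^k}" using nu_inj by (meson inj_on_subset subset_UNIV)
  moreover have sub: "nu ` {..<2^k} \<subseteq> Pow {0..<k}" using nu_sub by auto
  moreover have "card (nu ` {..<2^k}) = card (Pow {0..<k})"
    using calculation by (simp add: card_image card_Pow)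
  ultimately show ?thesis by (simp add: bij_betw_def card_subset_eq)
qed



definition symd :: "'a set \<Rightarrow> 'a set \<Rightarrow> 'a set" where "symd A B = (A - B) \<union> (B - A)"

lemma card_symd: assumes "finite A" "finite B"
  shows "card (symd A B) + 2 * card (A \<inter> B) = card A + card B"
proof -
  have "card (symd A B) = card (A - B) + card (B - A)"
    unfolding symd_def using assms by (subst card_Un_disjoint) auto
  moreover have "card A = card (A - B) + card (A \<inter> B)"
  proof -
    have "A = (A - B) \<union> (A \<inter> B)" by auto
    thus ?thesis using assms by (metis card_Un_disjoint finite_Diff finite_Int Diff_disjoint Int_Diff_disjoint inf_commute)
  qed
  moreover have "card B = card (B - A) + card (A \<inter> B)"
  proof -
    have "B = (B - A) \<union> (A \<inter> B)" by auto
    thus ?thesis using assms by (metis card_Un_disjoint finite_Diff finite_Int Diff_disjoint Int_Diff_disjoint inf_commute)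
  qed
  ultimately show ?thesis by simp
qed

lemma par_lemma: "(c::nat) + 2*d = c1 + c2 \<Longrightarrow> odd c \<longleftrightarrow> (odd c1 \<longleftrightarrow> \<not> odd c2)"
  by presburger

lemma vadd_symd: "vadd x y = symd x y" by (simp add: vadd_def symd_def)

lemma card_vadd_Int: assumes "finite a"
  shows "card (vadd x y \<inter> a) + 2 * card (x \<inter> y \<inter> a) = card (x \<inter> a) + card (y \<inter> a)"
proof -
  have "vadd x y \<inter> a = symd (x \<inter> a) (y \<inter> a)" by (auto simp: vadd_def symd_def)
  moreover have "x \<inter> y \<inter> a = (x \<inter> a) \<inter> (y \<inter> a)" by auto
  ultimately show ?thesis using card_symd[of "x \<inter> a" "y \<inter> a"] assms by simp
qed

lemma even_vadd: assumes "finite a"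
  shows "even (card (vadd x y \<inter> a)) \<longleftrightarrow> (even (card (x \<inter> a)) \<longleftrightarrow> even (card (y \<inter> a)))"
  using par_lemma[OF card_vadd_Int[OF assms, of x y]] by blast

lemma vsum_empty[simp]: "vsum {} = {}" by (simp add: vsum_def)

lemma vsum_insert: assumes "finite T" "t \<notin> T" shows "vsum (insert t T) = vadd t (vsum T)"
proof -
  have "card {t'\<in>insert t T. j \<in> t'} = (if j \<in> t then Suc (card {t'\<in>T. j \<in> t'}) else card {t'\<in>T. j \<in> t'})" for j
  proof (cases "j \<in> t")
    case True
    hence "{t'\<in>insert t T. j \<in> t'} = insert t {t'\<in>T. j \<in> t'}" by auto
    thus ?thesis using True assms by simp
  next
    case False
    hence "{t'\<in>insert t T. j \<in> t'} = {t'\<in>T. j \<in> t'}" by auto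
    thus ?thesis using False by simp
  qed
  thus ?thesis by (auto simp: vsum_def vadd_def)
qed

lemma vsum_closed: assumes "{} \<in> S" "\<forall>x\<in>S. \<forall>y\<in>S. vadd x y \<in> S" "finite T" "T \<subseteq> S"
  shows "vsum T \<in> S"
  using assms(3,4)
proof (induction T rule: finite_induct)
  case empty then show ?case using assms(1) by simp
next
  case (insert t T) then show ?case using assms(2) by (simp add: vsum_insert)
qed

lemma vsum_symd: assumes "finite T1" "finite T2"
  shows "vsum (symd T1 T2) = vadd (vsum T1) (vsum T2)"
proof -
  have "odd (card {t\<in>symd T1 T2. j \<in> t}) \<longleftrightarrow> (odd (card {t\<in>T1. j\<in>t}) \<longleftrightarrow> \<not> odd (card {t\<in>T2. j\<in>t}))" for j
  proof -
    have "{t\<in>symd T1 T2. j \<in> t} = symd {t\<in>T1. j\<in>t} {t\<in>T2. j\<in>t}" by (auto simp: symd_def)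
    thus ?thesis using card_symd[of "{t\<in>T1. j\<in>t}" "{t\<in>T2. j\<in>t}"] assms
      by (intro par_lemma) simp
  qed
  thus ?thesis by (auto simp: vsum_def vadd_def)
qed


definition hyp :: "nat \<Rightarrow> nat set \<Rightarrow> nat set set" where
  "hyp k a = {x\<in>Pow {0..<k}. even (card (x \<inter> a))}"

lemma hyp_subspace: assumes "a \<subseteq> {0..<k}" shows "is_subspace k (hyp k a)"
proof -
  have fa: "finite a" using assms finite_subset by blast
  show ?thesis unfolding is_subspace_def Wsp_def hyp_def
    using even_vadd[OF fa] by (auto simp: vadd_def)
qed

lemma hyp_in_Xi: assumes a: "a \<subseteq> {0..<k}" "a \<noteq> {}" shows "hyp k a \<in> Xi k (k - 1)"
proof -
  define K where "K = {0..<k}"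
  obtain m where m: "m \<in> a" using a by blast
  have fa: "finite a" using a finite_subset by blast
  define B where "B = (\<lambda>j. {j}) ` (K - a) \<union> (\<lambda>j. {m,j}) ` (a - {m})"
  have finB: "finite B" unfolding B_def K_def using fa by simp
  have mK: "m \<in> K" using m a K_def by auto
  have cardB: "card B = k - 1"
  proof -
    have "card B = card ((\<lambda>j. {j}) ` (K - a)) + card ((\<lambda>j. {m,j}) ` (a - {m}))"
      unfolding B_def by (rule card_Un_disjoint) (use fa in \<open>auto simp: K_def doubleton_eq_iff\<close>)
    also have "card ((\<lambda>j. {j}) ` (K - a)) = card (K - a)" by (rule card_image) (auto simp: inj_on_def)
    also have "card ((\<lambda>j. {m,j}) ` (a - {m})) = card (a - {m})"
      by (rule card_image) (auto simp: inj_on_def doubleton_eq_iff)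
    also have "card (K - a) = k - card a" using a by (simp add: K_def card_Diff_subset fa)
    also have "card (a - {m}) = card a - 1" using m by simp
    finally have cB: "card B = (k - card a) + (card a - 1)" .
    have "card a \<le> k" using card_mono[of K a] a by (simp add: K_def)
    moreover have "card a \<ge> 1" using m fa by (metis One_nat_def Suc_leI card_gt_0_iff empty_iff)
    ultimately show ?thesis using cB by linarith
  qed
  have Bsub: "B \<subseteq> hyp k a"
    unfolding B_def hyp_def K_def using a m by (auto simp: Int_insert_left)
  have indep: "F2_indep B"
    unfolding F2_indep_def
  proof (intro conjI allI impI finB)
    fix T assume T: "T \<subseteq> B" "T \<noteq> {}"
    then obtain t where t: "t \<in> T" by blast
    have finT: "finite T" using T finB finite_subset by blast
    show "vsum T \<noteq> {}"
    proof (cases "t \<in> (\<lambda>j. {j}) ` (K - a)")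
      case True
      then obtain j where j: "j \<in> K - a" "t = {j}" by blast
      have "t' = t" if "t' \<in> T" "j \<in> t'" for t'
      proof -
        have "t' \<in> B" using that T by blast
        then consider j' where "j' \<in> K - a" "t' = {j'}" | j' where "j' \<in> a - {m}" "t' = {m,j'}"
          unfolding B_def by blast
        thus ?thesis using that j m by cases auto
      qed
      hence "{t'\<in>T. j \<in> t'} = {t}" using t j by blast
      hence "j \<in> vsum T" by (simp add: vsum_def)
      thus ?thesis by blast
    next
      case False
      then obtain j where j: "j \<in> a - {m}" "t = {m,j}" using t T unfolding B_def by blast
      have "t' = t" if "t' \<in> T" "j \<in> t'" for t'
      proof -
        have "t' \<in> B" using that T by blast
        then consider j' where "j' \<in> K - a" "t' = {j'}" | j' where "j' \<in> a - {m}" "t' = {m,j'}"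
          unfolding B_def by blast
        thus ?thesis using that j m by cases auto
      qed
      hence "{t'\<in>T. j \<in> t'} = {t}" using t j by blast
      hence "j \<in> vsum T" by (simp add: vsum_def)
      thus ?thesis by blast
    qed
  qed
  have span: "F2_span B = hyp k a"
  proof
    show "F2_span B \<subseteq> hyp k a"
    proof
      fix x assume "x \<in> F2_span B"
      then obtain T where T: "T \<subseteq> B" "x = vsum T" unfolding F2_span_def by blast
      have "finite T" using T finB finite_subset by blast
      thus "x \<in> hyp k a" using T Bsub vsum_closed[of "hyp k a" T] hyp_subspace[OF a(1)]
        unfolding is_subspace_def by blast
    qed
  next
    show "hyp k a \<subseteq> F2_span B"
    proof
      fix x assume x: "x \<in> hyp k a"
      hence xK: "x \<subseteq> K" and ev: "even (card (x \<inter> a))" by (auto simp: hyp_def K_def)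
      define T where "T = (\<lambda>j. {j}) ` (x - a) \<union> (\<lambda>j. {m,j}) ` ((x \<inter> a) - {m})"
      have TB: "T \<subseteq> B" unfolding T_def B_def using xK by auto
      have "vsum T = x"
      proof -
        have "j \<in> vsum T \<longleftrightarrow> j \<in> x" for j
        proof -
          consider "j \<notin> a" | "j \<in> a" "j \<noteq> m" | "j = m" by blast
          thus ?thesis
          proof cases
            case 1
            hence "{t\<in>T. j \<in> t} = (if j \<in> x then {{j}} else {})" unfolding T_def using m by auto
            thus ?thesis by (simp add: vsum_def)
          next
            case 2
            hence "{t\<in>T. j \<in> t} = (if j \<in> x then {{m,j}} else {})" unfolding T_def using m by auto
            thus ?thesis by (simp add: vsum_def)
          next
            case 3
            hence "{t\<in>T. j \<in> t} = (\<lambda>j. {m,j}) ` ((x \<inter> a) - {m})" unfolding T_def using m by auto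
            moreover have "card ((\<lambda>j. {m,j}) ` ((x \<inter> a) - {m})) = card ((x \<inter> a) - {m})"
              by (rule card_image) (auto simp: inj_on_def doubleton_eq_iff)
            moreover have "card ((x \<inter> a) - {m}) = (if m \<in> x then card (x \<inter> a) - 1 else card (x \<inter> a))"
              using m by auto
            moreover have "m \<in> x \<Longrightarrow> card (x \<inter> a) > 0" using m fa by (auto simp: card_gt_0_iff)
            ultimately show ?thesis using ev 3 by (auto simp: vsum_def)
          qed
        qed
        thus ?thesis by blast
      qed
      thus "x \<in> F2_span B" unfolding F2_span_def using TB by blast
    qed
  qed
  show ?thesis unfolding Xi_def using hyp_subspace[OF a(1)] Bsub indep cardB span
    by (auto intro!: exI[of _ B])
qed


lemma vadd_self[simp]: "vadd x x = {}" by (simp add: vadd_def)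
lemma vadd_comm: "vadd x y = vadd y x" by (auto simp: vadd_def)
lemma vadd_vadd: "vadd x (vadd x y) = y" by (auto simp: vadd_def)
lemma vadd_sub: "x \<subseteq> K \<Longrightarrow> y \<subseteq> K \<Longrightarrow> vadd x y \<subseteq> K" by (auto simp: vadd_def)

lemma Xi_card: assumes "S \<in> Xi k d" shows "card S = 2^d"
proof -
  obtain B where B: "B \<subseteq> S" "F2_indep B" "card B = d" "F2_span B = S"
    using assms unfolding Xi_def by blast
  have finB: "finite B" using B(2) by (simp add: F2_indep_def)
  have inj: "inj_on vsum (Pow B)"
  proof (rule inj_onI)
    fix T1 T2 assume T: "T1 \<in> Pow B" "T2 \<in> Pow B" "vsum T1 = vsum T2"
    have f: "finite T1" "finite T2" using T finB finite_subset by auto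
    have "vsum (symd T1 T2) = {}" using vsum_symd[OF f] T(3) by simp
    moreover have "symd T1 T2 \<subseteq> B" using T by (auto simp: symd_def)
    ultimately have "symd T1 T2 = {}" using B(2) unfolding F2_indep_def by blast
    thus "T1 = T2" by (auto simp: symd_def)
  qed
  have "S = vsum ` Pow B" using B(4) unfolding F2_span_def by auto
  hence "card S = card (Pow B)" using inj by (simp add: card_image)
  thus ?thesis using finB B(3) by (simp add: card_Pow)
qed

lemma Xi_hyp: assumes S: "S \<in> Xi k (k - 1)" and k: "k \<ge> 1"
  shows "\<exists>a. a \<subseteq> {0..<k} \<and> a \<noteq> {} \<and> S = hyp k a"
proof -
  define K where "K = {0..<k}"
  define W where "W = Pow K"
  have sub: "is_subspace k S" using S by (simp add: Xi_def)
  hence SW: "S \<subseteq> W" and e: "{} \<in> S" and c1: "\<And>x y. x \<in> S \<Longrightarrow> y \<in> S \<Longrightarrow> vadd x y \<in> S"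
    by (auto simp: is_subspace_def Wsp_def W_def K_def)
  have cS: "card S = 2^(k-1)" using Xi_card[OF S] .
  have cW: "card W = 2^k" by (simp add: W_def K_def card_Pow)
  have finW: "finite W" by (simp add: W_def K_def)
  have kk: "(2::nat)^k = 2 * 2^(k-1)" using k by (metis Suc_diff_1 less_le_trans zero_less_one power_Suc)
  have vW: "vadd x y \<in> W" if "x \<in> W" "y \<in> W" for x y using that vadd_sub[of x K y] by (auto simp: W_def)
  have c2: "vadd x y \<notin> S" if "x \<in> S" "y \<notin> S" for x y
  proof
    assume "vadd x y \<in> S"
    hence "vadd x (vadd x y) \<in> S" using c1 that(1) by blast
    thus False using that(2) by (simp add: vadd_vadd)
  qed
  have c3: "vadd x y \<in> S" if xy: "x \<in> W - S" "y \<in> W - S" for x y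
  proof -
    have img: "vadd x ` S \<subseteq> W - S"
    proof
      fix z assume "z \<in> vadd x ` S"
      then obtain s where s: "s \<in> S" "z = vadd x s" by blast
      have "z \<notin> S" using c2[of s x] s that(1) by (simp add: vadd_comm)
      moreover have "z \<in> W" using vW[of x s] s SW that(1) by auto
      ultimately show "z \<in> W - S" by blast
    qed
    have "inj_on (vadd x) S" by (rule inj_onI) (metis vadd_vadd)
    hence "card (vadd x ` S) = 2^(k-1)" using cS by (simp add: card_image)
    moreover have "card (W - S) = 2^(k-1)" using cS cW SW finW kk by (simp add: card_Diff_subset finite_subset)
    ultimately have "vadd x ` S = W - S" using img finW by (simp add: card_subset_eq)
    then obtain s where s: "s \<in> S" "y = vadd x s" using xy(2) by (metis imageE)
    thus ?thesis by (simp add: vadd_vadd)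
  qed
  define a where "a = {j\<in>K. {j} \<notin> S}"
  have fa: "finite a" by (simp add: a_def K_def)
  have main: "x \<in> S \<longleftrightarrow> even (card (x \<inter> a))" if "x \<subseteq> K" for x
  proof -
    have "finite x" using that finite_subset by (auto simp: K_def)
    thus ?thesis using that
    proof (induction x rule: finite_induct)
      case empty then show ?case using e by simp
    next
      case (insert j x)
      have jK: "j \<in> K" and xK: "x \<subseteq> K" using insert.prems by auto
      have eq: "insert j x = vadd {j} x" using insert.hyps by (auto simp: vadd_def)
      have jW: "{j} \<in> W" and xW: "x \<in> W" using jK xK by (auto simp: W_def)
      have par: "even (card (insert j x \<inter> a)) \<longleftrightarrow> (even (card (x \<inter> a)) \<longleftrightarrow> {j} \<in> S)"
      proof (cases "j \<in> a")
        case True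
        hence "insert j x \<inter> a = insert j (x \<inter> a)" by auto
        moreover have "{j} \<notin> S" using True by (simp add: a_def)
        ultimately show ?thesis using insert.hyps fa by simp
      next
        case False
        hence "insert j x \<inter> a = x \<inter> a" by auto
        moreover have "{j} \<in> S" using False jK by (simp add: a_def)
        ultimately show ?thesis by simp
      qed
      have IH: "x \<in> S \<longleftrightarrow> even (card (x \<inter> a))" using insert.IH xK by blast
      have "insert j x \<in> S \<longleftrightarrow> (x \<in> S \<longleftrightarrow> {j} \<in> S)"
        using c1[of "{j}" x] c2[of "{j}" x] c2[of x "{j}"] c3[of "{j}" x] jW xW eq vadd_comm[of x "{j}"]
        by (cases "x \<in> S"; cases "{j} \<in> S") auto
      thus ?case using par IH by simp
    qed
  qed
  have "a \<noteq> {}"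
  proof
    assume "a = {}"
    hence "W \<subseteq> S" using main by (auto simp: W_def)
    hence "S = W" using SW by blast
    thus False using cS cW kk by simp
  qed
  moreover have "S = hyp k a" using main SW by (auto simp: hyp_def W_def K_def)
  moreover have "a \<subseteq> {0..<k}" by (auto simp: a_def K_def)
  ultimately show ?thesis by blast
qed

lemma hyp_inj: "inj_on (hyp k) (Pow {0..<k})"
proof (rule inj_onI)
  fix a b assume ab: "a \<in> Pow {0..<k}" "b \<in> Pow {0..<k}" "hyp k a = hyp k b"
  have "{j} \<in> hyp k c \<longleftrightarrow> j \<notin> c" if "j \<in> {0..<k}" for j c using that by (auto simp: hyp_def)
  thus "a = b" using ab by (metis subsetI subset_antisym Pow_iff subsetD)
qed

lemma Xi_eq: assumes "k \<ge> 1" shows "Xi k (k - 1) = hyp k ` (Pow {0..<k} - {{}})"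
  using Xi_hyp[OF _ assms] hyp_in_Xi by blast



lemma char_sum: assumes "finite K"
  shows "(\<Sum>a\<in>Pow K. (-1::real)^card (x \<inter> a)) = (if x \<inter> K = {} then 2^card K else 0)"
  using assms
proof (induction K rule: finite_induct)
  case empty then show ?case by simp
next
  case (insert k K)
  have disj: "Pow K \<inter> insert k ` Pow K = {}" using insert.hyps by auto
  have inj: "inj_on (insert k) (Pow K)" using insert.hyps by (auto simp: inj_on_def)
  have "(\<Sum>a\<in>Pow (insert k K). (-1::real)^card (x \<inter> a))
      = (\<Sum>a\<in>Pow K. (-1::real)^card (x \<inter> a)) + (\<Sum>a\<in>insert k ` Pow K. (-1::real)^card (x \<inter> a))"
    unfolding Pow_insert using disj insert.hyps by (subst sum.union_disjoint) auto
  also have "(\<Sum>a\<in>insert k ` Pow K. (-1::real)^card (x \<inter> a)) = (\<Sum>a\<in>Pow K. (-1::real)^card (x \<inter> insert k a))"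
    using inj by (simp add: sum.reindex)
  also have "\<dots> = (\<Sum>a\<in>Pow K. (if k \<in> x then -1 else 1) * (-1::real)^card (x \<inter> a))"
  proof (rule sum.cong[OF refl])
    fix a assume a: "a \<in> Pow K"
    hence fa: "finite a" "k \<notin> a" using insert.hyps finite_subset by auto
    show "(-1::real)^card (x \<inter> insert k a) = (if k \<in> x then -1 else 1) * (-1)^card (x \<inter> a)"
    proof (cases "k \<in> x")
      case True
      hence "x \<inter> insert k a = insert k (x \<inter> a)" by auto
      thus ?thesis using True fa by simp
    next
      case False
      hence "x \<inter> insert k a = x \<inter> a" by auto
      thus ?thesis using False by simp
    qed
  qed
  finally show ?case using insert.IH insert.hyps
    by (auto simp: sum_distrib_left[symmetric])
qed

definition Qh :: "nat \<Rightarrow> (nat \<Rightarrow> real) \<Rightarrow> nat set \<Rightarrow> real" where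
  "Qh k q a = (\<Sum>i<2^k. q i * (-1)^card (nu i \<inter> a))"

lemma zeta_hyp: assumes "a \<subseteq> {0..<k}"
  shows "zeta k (hyp k a) q = ((\<Sum>i<2^k. q i) + Qh k q a) / 2"
proof -
  have "{i. i < 2^k \<and> nu i \<in> hyp k a} = {i\<in>{..<2^k}. even (card (nu i \<inter> a))}"
    using nu_sub by (auto simp: hyp_def)
  hence "zeta k (hyp k a) q = sum q {i\<in>{..<2^k}. even (card (nu i \<inter> a))}"
    unfolding zeta_def by (simp only:)
  also have "\<dots> = (\<Sum>i<2^k. if even (card (nu i \<inter> a)) then q i else 0)"
    by (rule sum.inter_filter) simp
  also have "\<dots> = (\<Sum>i<2^k. (q i + q i * (-1)^card (nu i \<inter> a)) / 2)"
    by (rule sum.cong) auto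
  also have "\<dots> = ((\<Sum>i<2^k. q i) + Qh k q a) / 2"
    unfolding Qh_def by (simp add: sum.distrib flip: sum_divide_distrib)
  finally show ?thesis .
qed

lemma Qh_sum: "(\<Sum>a\<in>Pow {0..<k}. Qh k q a) = 2^k * q 0"
proof -
  have "(\<Sum>a\<in>Pow {0..<k}. Qh k q a) = (\<Sum>i<2^k. q i * (\<Sum>a\<in>Pow {0..<k}. (-1)^card (nu i \<inter> a)))"
    unfolding Qh_def by (simp add: sum_distrib_left sum.swap[of _ "Pow _"])
  also have "\<dots> = (\<Sum>i<(2::nat)^k. if i = 0 then 2^k * q 0 else 0)"
  proof (rule sum.cong[OF refl])
    fix i :: nat assume "i \<in> {..<2^k}"
    hence "nu i \<inter> {0..<k} = nu i" using nu_sub by auto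
    thus "q i * (\<Sum>a\<in>Pow {0..<k}. (-1)^card (nu i \<inter> a)) = (if i = 0 then 2^k * q 0 else 0)"
      by (simp add: char_sum nu_empty)
  qed
  finally show ?thesis by simp
qed

lemma sign_vadd: assumes "finite a"
  shows "(-1::real)^card (x \<inter> a) * (-1)^card (y \<inter> a) = (-1)^card (vadd x y \<inter> a)"
proof -
  have "(-1::real)^card (x \<inter> a) * (-1)^card (y \<inter> a) = (-1)^(card (x \<inter> a) + card (y \<inter> a))"
    by (simp add: power_add)
  also have "\<dots> = (-1)^(card (vadd x y \<inter> a) + 2 * card (x \<inter> y \<inter> a))"
    using card_vadd_Int[OF assms, of x y] by simp
  also have "\<dots> = (-1)^card (vadd x y \<inter> a)" by (simp add: power_add power_mult)
  finally show ?thesis .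
qed

lemma Qh_sq_sum: "(\<Sum>a\<in>Pow {0..<k}. (Qh k q a)^2) = 2^k * (\<Sum>i<2^k. (q i)^2)"
proof -
  have "(\<Sum>a\<in>Pow {0..<k}. (Qh k q a)^2)
      = (\<Sum>a\<in>Pow {0..<k}. \<Sum>i<2^k. \<Sum>j<2^k. q i * q j * (-1)^card (vadd (nu i) (nu j) \<inter> a))"
  proof (rule sum.cong[OF refl])
    fix a assume "a \<in> Pow {0..<k}"
    hence fa: "finite a" using finite_subset by auto
    show "(Qh k q a)^2 = (\<Sum>i<2^k. \<Sum>j<2^k. q i * q j * (-1)^card (vadd (nu i) (nu j) \<inter> a))"
      unfolding Qh_def power2_eq_square sum_product
      by (rule sum.cong[OF refl], rule sum.cong[OF refl]) (simp add: sign_vadd[OF fa, symmetric] mult_ac)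
  qed
  also have "\<dots> = (\<Sum>i<2^k. \<Sum>j<2^k. q i * q j * (\<Sum>a\<in>Pow {0..<k}. (-1)^card (vadd (nu i) (nu j) \<inter> a)))"
    by (simp add: sum_distrib_left sum.swap[of _ "Pow _"])
  also have "\<dots> = (\<Sum>i<(2::nat)^k. \<Sum>j<(2::nat)^k. if i = j then 2^k * (q i)^2 else 0)"
  proof (intro sum.cong[OF refl])
    fix i j :: nat assume ij: "i \<in> {..<2^k}" "j \<in> {..<2^k}"
    have "vadd (nu i) (nu j) \<subseteq> {0..<k}" using nu_sub ij vadd_sub by auto
    hence "vadd (nu i) (nu j) \<inter> {0..<k} = vadd (nu i) (nu j)" by auto
    moreover have "vadd (nu i) (nu j) = {} \<longleftrightarrow> i = j"
    proof -
      have "vadd (nu i) (nu j) = {} \<longleftrightarrow> nu i = nu j" by (auto simp: vadd_def)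
      also have "\<dots> \<longleftrightarrow> i = j" using inj_eq[OF nu_inj] .
      finally show ?thesis .
    qed
    ultimately show "q i * q j * (\<Sum>a\<in>Pow {0..<k}. (-1)^card (vadd (nu i) (nu j) \<inter> a)) = (if i = j then 2^k * (q i)^2 else 0)"
      by (simp add: char_sum power2_eq_square)
  qed
  also have "\<dots> = 2^k * (\<Sum>i<2^k. (q i)^2)"
    by (simp add: sum_distrib_left)
  finally show ?thesis .
qed



lemma powi_c: assumes "k \<ge> 1" shows "(2::real) powi (1 - int k) = 2 / 2^k"
proof -
  have "(2::real) powi (1 - int k) = 2 powi 1 / 2 powi (int k)"
    by (simp add: power_int_diff)
  thus ?thesis by simp
qed

lemma powi_m: "(2::real) powi (- int k) = 1 / 2^k"
  by (simp add: power_int_minus divide_inverse)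

lemma qcheck_lt: assumes "i < 2^k" "k \<ge> 1"
  shows "qcheck k i = (if k - 1 \<in> nu i then 2 / 2^k else 0)"
  using assms nu_top[OF assms] powi_c[OF assms(2)] by (auto simp: qcheck_def)

lemma Qh_qcheck: assumes k: "k \<ge> 1" and a: "a \<subseteq> {0..<k}" "a \<noteq> {}"
  shows "Qh k (qcheck k) a = (if a = {k - 1} then -1 else 0)"
proof -
  define K where "K = {0..<k}"
  define g where "g = (\<lambda>x. (if k - 1 \<in> x then 2 / 2^k else 0) * (-1::real)^card (x \<inter> a))"
  have "Qh k (qcheck k) a = (\<Sum>i<2^k. g (nu i))"
    unfolding Qh_def g_def by (rule sum.cong) (use qcheck_lt k in auto)
  also have "\<dots> = (\<Sum>x\<in>Pow K. g x)" unfolding K_def by (rule sum.reindex_bij_betw[OF nu_bij])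
  also have "\<dots> = (\<Sum>x\<in>Pow K. (1 / 2^k) * ((-1)^card (a \<inter> x) - (-1)^card (vadd a {k-1} \<inter> x)))"
  proof (rule sum.cong[OF refl])
    fix x assume "x \<in> Pow K"
    hence fx: "finite x" unfolding K_def using finite_subset by auto
    have s: "(-1::real)^card (a \<inter> x) * (-1)^card ({k-1} \<inter> x) = (-1)^card (vadd a {k-1} \<inter> x)"
      by (rule sign_vadd[OF fx])
    show "g x = (1 / 2^k) * ((-1)^card (a \<inter> x) - (-1)^card (vadd a {k-1} \<inter> x))"
    proof (cases "k - 1 \<in> x")
      case True
      hence "{k-1} \<inter> x = {k-1}" by auto
      hence "(-1::real)^card (vadd a {k-1} \<inter> x) = (-1) * (-1::real)^card (a \<inter> x)" using s by simp
      thus ?thesis using True unfolding g_def by (simp add: Int_commute)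
    next
      case False
      hence "{k-1} \<inter> x = {}" by auto
      hence "(-1::real)^card (vadd a {k-1} \<inter> x) = (-1)^card (a \<inter> x)" using s by simp
      thus ?thesis using False unfolding g_def by (simp add: Int_commute)
    qed
  qed
  also have "\<dots> = (1 / 2^k) * ((\<Sum>x\<in>Pow K. (-1)^card (a \<inter> x)) - (\<Sum>x\<in>Pow K. (-1)^card (vadd a {k-1} \<inter> x)))"
    by (simp add: sum_distrib_left sum_subtractf right_diff_distrib)
  also have "(\<Sum>x\<in>Pow K. (-1::real)^card (a \<inter> x)) = 0"
    using char_sum[of K a] a by (simp add: K_def Int_absorb2)
  also have "(\<Sum>x\<in>Pow K. (-1::real)^card (vadd a {k-1} \<inter> x)) = (if a = {k-1} then 2^k else 0)"
  proof -
    have sub: "vadd a {k-1} \<subseteq> K" using a k vadd_sub[of a K "{k-1}"] by (auto simp: K_def)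
    have "vadd a {k-1} = {} \<longleftrightarrow> a = {k-1}" by (auto simp: vadd_def)
    thus ?thesis using char_sum[of K "vadd a {k-1}"] sub by (simp add: K_def Int_absorb2)
  qed
  finally show ?thesis by simp
qed



lemma sum_from1: assumes "f 0 = 0" "N \<ge> (1::nat)" shows "(\<Sum>i<N. f i) = (\<Sum>i\<in>{1..<N}. (f i :: real))"
proof -
  have "(\<Sum>i<N. f i) = (\<Sum>i\<in>{0..<N}. f i)" by (simp add: lessThan_atLeast0)
  also have "\<dots> = f 0 + (\<Sum>i\<in>{Suc 0..<N}. f i)" using assms(2) by (subst sum.atLeast_Suc_lessThan) auto
  finally show ?thesis using assms(1) by simp
qed

lemma sq_expand: "(\<Sum>i\<in>I. (q i - d)^2) = (\<Sum>i\<in>I. (q i)^2) - 2 * d * (\<Sum>i\<in>I. q i) + real (card I) * d^2"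
proof -
  have "(\<Sum>i\<in>I. (q i - d)^2) = (\<Sum>i\<in>I. (q i)^2 - (2*d) * q i + d^2)"
    by (rule sum.cong) (auto simp: power2_diff)
  also have "\<dots> = (\<Sum>i\<in>I. (q i)^2) - (\<Sum>i\<in>I. (2*d) * q i) + (\<Sum>i\<in>I. d^2)"
    by (simp add: sum.distrib sum_subtractf)
  also have "(\<Sum>i\<in>I. (2*d) * q i) = 2 * d * (\<Sum>i\<in>I. q i)" by (simp add: sum_distrib_left)
  finally show ?thesis by simp
qed

lemma alg1: assumes "(m::real) > 1"
  shows "(m - 1) * (1 / (2 * m - 1))^2 + m * (1 / m - 1 / (2 * m - 1))^2 = (m - 1) / (m * (2 * m - 1))"
proof -
  have p: "2*m - 1 > 0" "m > 0" using assms by auto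
  have a: "1 / m - 1 / (2 * m - 1) = (m - 1) / (m * (2 * m - 1))" using p by (simp add: field_simps)
  have "m * ((m - 1) / (m * (2 * m - 1)))^2 = (m - 1)^2 / (m * (2*m - 1)^2)"
    using p by (simp add: power2_eq_square)
  moreover have "(m - 1) * (1 / (2 * m - 1))^2 = (m - 1) * m / (m * (2*m - 1)^2)"
    using p by (simp add: power2_eq_square)
  ultimately have "(m - 1) * (1 / (2 * m - 1))^2 + m * (1 / m - 1 / (2 * m - 1))^2
     = ((m - 1) * m + (m - 1)^2) / (m * (2*m - 1)^2)" unfolding a by (simp add: add_divide_distrib)
  also have "(m - 1) * m + (m - 1)^2 = (m - 1) * (2 * m - 1)" by (simp add: power2_eq_square algebra_simps)
  also have "(m - 1) * (2 * m - 1) / (m * (2*m - 1)^2) = (m - 1) / (m * (2 * m - 1))"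
    using p by (simp add: power2_eq_square)
  finally show ?thesis .
qed

lemma qcheck_in: assumes k: "k \<ge> 2" shows "qcheck k \<in> C_rho k"
proof -
  define M :: nat where "M = 2^(k-1)"
  have N: "(2::nat)^k = 2 * M" unfolding M_def using k
    by (metis Suc_diff_1 less_le_trans pos2 power_Suc zero_less_two numeral_le_iff)
  have M2: "M \<ge> 2" unfolding M_def using k
    by (metis Nat.le_diff_conv2 add_leD1 le_add_diff_inverse one_add_one one_le_numeral power_increasing power_one_right)
  have Nr: "(2::real)^k = 2 * real M" using N by (metis of_nat_mult of_nat_numeral of_nat_power)
  have Mr: "(2::real)^(k-1) = real M" unfolding M_def by simp
  have c: "2 / (2::real)^k = 1 / real M" using Nr by simp
  have q_low: "qcheck k i = 0" if "i < M" for i using that by (simp add: qcheck_def M_def)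
  have q_high: "qcheck k i = 1 / real M" if "M \<le> i" "i < 2 * M" for i
    using that qcheck_lt[of i k] nu_top[of i k] k N c by (simp add: M_def)
  have split: "\<And>f::nat\<Rightarrow>real. (\<Sum>i\<in>{1..<2*M}. f i) = (\<Sum>i\<in>{1..<M}. f i) + (\<Sum>i\<in>{M..<2*M}. f i)"
    using M2 by (subst sum.atLeastLessThan_concat) auto
  have s1: "(\<Sum>i<2^k. qcheck k i) = 1"
  proof -
    have "(\<Sum>i<2^k. qcheck k i) = (\<Sum>i\<in>{1..<2*M}. qcheck k i)"
      using N M2 by (subst sum_from1) (auto simp: q_low)
    also have "\<dots> = (\<Sum>i\<in>{1..<M}. 0) + (\<Sum>i\<in>{M..<2*M}. 1 / real M)"
      unfolding split by (intro arg_cong2[where f="(+)"] sum.cong) (auto simp: q_low q_high)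
    also have "\<dots> = 1" using M2 by simp
    finally show ?thesis .
  qed
  have s2: "(\<Sum>i\<in>{1..<2^k}. (qcheck k i - 1 / (2^k - 1))^2) =
        (2^(k-1) - 1) / ((2^k - 2^(k-1)) * (2^k - 1))"
  proof -
    have "(\<Sum>i\<in>{1..<2^k}. (qcheck k i - 1 / (2^k - 1))^2)
        = (\<Sum>i\<in>{1..<M}. (1 / (2 * real M - 1))^2) + (\<Sum>i\<in>{M..<2*M}. (1 / real M - 1 / (2 * real M - 1))^2)"
      unfolding N split Nr by (intro arg_cong2[where f="(+)"] sum.cong) (auto simp: q_low q_high)
    also have "\<dots> = (real M - 1) * (1 / (2 * real M - 1))^2 + real M * (1 / real M - 1 / (2 * real M - 1))^2"
      using M2 by (simp add: of_nat_diff)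
    also have "\<dots> = (real M - 1) / (real M * (2 * real M - 1))"
      using M2 alg1[of "real M"] by simp
    also have "\<dots> = (2^(k-1) - 1) / ((2^k - 2^(k-1)) * (2^k - 1))"
      unfolding Nr Mr by (simp add: algebra_simps)
    finally show ?thesis .
  qed
  have nn: "\<forall>i<2^k. qcheck k i \<ge> 0" by (simp add: qcheck_def)
  have z: "qcheck k 0 = 0" by (simp add: qcheck_def)
  show ?thesis unfolding C_rho_def using s1 s2 nn z by simp
qed



lemma sq_from_C: assumes k: "k \<ge> 2" and q: "q \<in> C_rho k"
  shows "(\<Sum>i<2^k. (q i)^2) = 2 / 2^k"
proof -
  define M :: nat where "M = 2^(k-1)"
  have N: "(2::nat)^k = 2 * M" unfolding M_def using k
    by (metis Suc_diff_1 less_le_trans pos2 power_Suc zero_less_two numeral_le_iff)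
  have M2: "M \<ge> 2" unfolding M_def using k
    by (metis Nat.le_diff_conv2 add_leD1 le_add_diff_inverse one_add_one one_le_numeral power_increasing power_one_right)
  have Nr: "(2::real)^k = 2 * real M" using N by (metis of_nat_mult of_nat_numeral of_nat_power)
  have Mr: "(2::real)^(k-1) = real M" unfolding M_def by simp
  from q have q0: "q 0 = 0" and s1: "(\<Sum>i<2^k. q i) = 1"
    and V: "(\<Sum>i\<in>{1..<2^k}. (q i - 1 / (2^k - 1))^2) = (2^(k-1) - 1) / ((2^k - 2^(k-1)) * (2^k - 1))"
    by (auto simp: C_rho_def)
  have Nge: "(2::nat)^k \<ge> 1" by simp
  have a1: "(\<Sum>i\<in>{1..<2^k}. q i) = 1" using s1 sum_from1[of q "2^k"] q0 Nge by simp
  have a2: "(\<Sum>i\<in>{1..<2^k}. (q i)^2) = (\<Sum>i<2^k. (q i)^2)" using sum_from1[of "\<lambda>i. (q i)^2" "2^k"] q0 Nge by simp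
  have cI: "real (card {1..<(2::nat)^k}) = 2 * real M - 1" using N M2 by (simp add: of_nat_diff)
  define d where "d = 1 / (2 * real M - 1)"
  have p: "2 * real M - 1 > 0" "real M > 0" using M2 by auto
  have "(\<Sum>i<2^k. (q i)^2) - 2 * d * 1 + (2 * real M - 1) * d^2 = (real M - 1) / (real M * (2 * real M - 1))"
    using V sq_expand[of q d "{1..<2^k}"] a1 a2 cI unfolding Nr Mr d_def by (simp add: algebra_simps)
  moreover have "(2 * real M - 1) * d^2 = d"
  proof -
    have e: "(2 * real M - 1) * d = 1" unfolding d_def using p by simp
    have "(2 * real M - 1) * d^2 = ((2 * real M - 1) * d) * d" by (simp add: power2_eq_square mult.assoc)
    thus ?thesis using e by simp
  qed
  ultimately have "(\<Sum>i<2^k. (q i)^2) = (real M - 1) / (real M * (2 * real M - 1)) + d" by simp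
  also have "\<dots> = 1 / real M"
  proof -
    have dd: "d = real M / (real M * (2 * real M - 1))" unfolding d_def using p by simp
    have "(real M - 1) / (real M * (2 * real M - 1)) + d = (real M - 1 + real M) / (real M * (2 * real M - 1))"
      unfolding dd by (rule add_divide_distrib[symmetric])
    also have "real M - 1 + real M = 2 * real M - 1" by simp
    also have "(2 * real M - 1) / (real M * (2 * real M - 1)) = 1 / real M" using p by simp
    finally show ?thesis .
  qed
  also have "\<dots> = 2 / 2^k" unfolding Nr by simp
  finally show ?thesis .
qed

lemma Qh_empty: "Qh k q {} = (\<Sum>i<2^k. q i)" by (simp add: Qh_def)

lemma Qh_nonneg: assumes "(\<Sum>i<2^k. q i) = 1" "\<forall>i<2^k. q i \<ge> 0" shows "1 + Qh k q a \<ge> 0"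
proof -
  have "1 + Qh k q a = (\<Sum>i<2^k. q i * (1 + (-1)^card (nu i \<inter> a)))"
    using assms(1) unfolding Qh_def by (simp add: algebra_simps sum.distrib)
  also have "\<dots> \<ge> 0"
  proof (rule sum_nonneg)
    fix i assume "i \<in> {..<(2::nat)^k}"
    hence "q i \<ge> 0" using assms(2) by simp
    moreover have "1 + (-1::real)^card (nu i \<inter> a) \<ge> 0"
      by (cases "even (card (nu i \<inter> a))") auto
    ultimately show "q i * (1 + (-1)^card (nu i \<inter> a)) \<ge> 0" by simp
  qed
  finally show ?thesis .
qed



theorem theorem8:
  fixes \<kappa> n :: nat and \<epsilon> :: real
  assumes "\<kappa> \<ge> 2" and "n \<ge> 1" and "0 < \<epsilon>" and "\<epsilon> < 1"
  shows "qcheck \<kappa> \<in> C_rho \<kappa> \<and>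
         (\<forall>q\<in>C_rho \<kappa>. lambda_chi \<kappa> n \<epsilon> (qcheck \<kappa>) \<le> lambda_chi \<kappa> n \<epsilon> q)"
proof -
  note k = assms(1)
  have k1: "\<kappa> \<ge> 1" using k by simp
  define K where "K = {0..<\<kappa>}"
  define A where "A = Pow K - {{}}"
  have finA: "finite A" by (simp add: A_def K_def)
  define r where "r = \<epsilon> / (2 - \<epsilon>)"
  have r0: "r > 0" and r1: "r < 1" using assms(3,4) by (auto simp: r_def field_simps)
  define L where "L = ln r"
  have L0: "L < 0" using r0 r1 by (simp add: L_def)
  define s where "s = - real n * L / 2"
  have np: "real n > 0" using assms(2) by simp
  have s0: "s > 0" using L0 np mult_pos_neg[OF np L0] by (simp add: s_def)
  define P where "P = (2 - \<epsilon>) ^ n * 2 powi (- int \<kappa>)"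
  have P0: "P > 0" using assms(4) by (simp add: P_def)
  define N :: real where "N = 2^\<kappa>"
  have N4: "N \<ge> 4"
  proof -
    have "(2::real)^2 \<le> 2^\<kappa>" by (rule power_increasing[OF k]) simp
    thus ?thesis by (simp add: N_def)
  qed
  have sumXi: "(\<Sum>S\<in>Xi \<kappa> (\<kappa> - 1). F S) = (\<Sum>a\<in>A. F (hyp \<kappa> a))" for F :: "nat set set \<Rightarrow> real"
  proof -
    have "inj_on (hyp \<kappa>) A" using hyp_inj[of \<kappa>] unfolding A_def K_def by (rule inj_on_subset) auto
    thus ?thesis unfolding Xi_eq[OF k1] A_def K_def by (simp add: sum.reindex)
  qed
  have trm: "r powr (real n * (1 - zeta \<kappa> (hyp \<kappa> a) q)) = exp (real n * L) * exp (s * (1 + Qh \<kappa> q a))"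
    if "a \<in> A" "(\<Sum>i<2^\<kappa>. q i) = 1" for a q
  proof -
    have "a \<subseteq> {0..<\<kappa>}" using that(1) by (auto simp: A_def K_def)
    hence z: "zeta \<kappa> (hyp \<kappa> a) q = (1 + Qh \<kappa> q a) / 2" using zeta_hyp that(2) by simp
    have "r powr (real n * (1 - zeta \<kappa> (hyp \<kappa> a) q)) = exp (real n * (1 - (1 + Qh \<kappa> q a) / 2) * L)"
      unfolding z powr_def L_def using r0 by simp
    also have "real n * (1 - (1 + Qh \<kappa> q a) / 2) * L = real n * L + s * (1 + Qh \<kappa> q a)"
      unfolding s_def by (simp add: field_simps)
    finally show ?thesis by (simp add: exp_add)
  qed
  have lam: "lambda_chi \<kappa> n \<epsilon> q = P * (1 + exp (real n * L) * (\<Sum>a\<in>A. exp (s * (1 + Qh \<kappa> q a)))) - 1"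
    if "(\<Sum>i<2^\<kappa>. q i) = 1" for q
  proof -
    have "(\<Sum>S\<in>Xi \<kappa> (\<kappa> - 1). (\<epsilon> / (2 - \<epsilon>)) powr (real n * (1 - zeta \<kappa> S q)))
        = (\<Sum>a\<in>A. exp (real n * L) * exp (s * (1 + Qh \<kappa> q a)))"
      unfolding sumXi r_def[symmetric] using trm that by (intro sum.cong) auto
    thus ?thesis unfolding lambda_chi_def P_def by (simp add: sum_distrib_left)
  qed
  have cardA: "card A = 2^\<kappa> - 1" unfolding A_def K_def by (simp add: card_Pow)
  have cardAr: "real (card A) = N - 1" unfolding cardA N_def by (simp add: of_nat_diff)
  have kA: "{\<kappa> - 1} \<in> A" using k1 by (auto simp: A_def K_def)
  have qin: "qcheck \<kappa> \<in> C_rho \<kappa>" by (rule qcheck_in[OF k])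
  have qsum: "(\<Sum>i<2^\<kappa>. qcheck \<kappa> i) = 1" using qin by (simp add: C_rho_def)
  have qc: "(\<Sum>a\<in>A. exp (s * (1 + Qh \<kappa> (qcheck \<kappa>) a))) = 1 + (N - 2) * exp s"
  proof -
    have "(\<Sum>a\<in>A. exp (s * (1 + Qh \<kappa> (qcheck \<kappa>) a))) = (\<Sum>a\<in>A. if a = {\<kappa> - 1} then 1 else exp s)"
    proof (rule sum.cong[OF refl])
      fix a assume "a \<in> A"
      hence "a \<subseteq> {0..<\<kappa>}" "a \<noteq> {}" by (auto simp: A_def K_def)
      thus "exp (s * (1 + Qh \<kappa> (qcheck \<kappa>) a)) = (if a = {\<kappa> - 1} then 1 else exp s)"
        using Qh_qcheck[OF k1] by simp
    qed
    also have "\<dots> = 1 + (\<Sum>a\<in>A - {{\<kappa> - 1}}. exp s)"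
      using finA kA by (simp add: sum.remove)
    also have "\<dots> = 1 + (N - 2) * exp s"
    proof -
      have cA1: "card A \<ge> 1" using finA kA by (metis Suc_leI card_gt_0_iff empty_iff One_nat_def)
      have "real (card (A - {{\<kappa> - 1}})) = real (card A) - 1"
        using finA kA cA1 by (simp add: card_Diff_singleton of_nat_diff)
      thus ?thesis using cardAr by simp
    qed
    finally show ?thesis .
  qed
  have main: "lambda_chi \<kappa> n \<epsilon> (qcheck \<kappa>) \<le> lambda_chi \<kappa> n \<epsilon> q" if q: "q \<in> C_rho \<kappa>" for q
  proof -
    from q have q0: "q 0 = 0" and s1: "(\<Sum>i<2^\<kappa>. q i) = 1" and nn: "\<forall>i<2^\<kappa>. q i \<ge> 0"
      by (auto simp: C_rho_def)
    have sq: "(\<Sum>i<2^\<kappa>. (q i)^2) = 2 / N" using sq_from_C[OF k q] by (simp add: N_def)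
    define x where "x = (\<lambda>a. 1 + Qh \<kappa> q a)"
    have xnn: "x a \<ge> 0" for a unfolding x_def by (rule Qh_nonneg[OF s1 nn])
    have e0: "{} \<in> Pow K" by simp
    have SQ: "(\<Sum>a\<in>A. Qh \<kappa> q a) = -1"
    proof -
      have "(\<Sum>a\<in>Pow K. Qh \<kappa> q a) = Qh \<kappa> q {} + (\<Sum>a\<in>A. Qh \<kappa> q a)"
        unfolding A_def by (rule sum.remove) (auto simp: K_def)
      thus ?thesis using Qh_sum[of \<kappa> q] q0 s1 Qh_empty[of \<kappa> q] by (simp add: K_def)
    qed
    have SQ2: "(\<Sum>a\<in>A. (Qh \<kappa> q a)^2) = N * (2 / N) - 1"
    proof -
      have "(\<Sum>a\<in>Pow K. (Qh \<kappa> q a)^2) = (Qh \<kappa> q {})^2 + (\<Sum>a\<in>A. (Qh \<kappa> q a)^2)"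
        unfolding A_def by (rule sum.remove) (auto simp: K_def)
      thus ?thesis using Qh_sq_sum[of \<kappa> q] sq s1 Qh_empty[of \<kappa> q] by (simp add: K_def N_def)
    qed
    have S1: "(\<Sum>a\<in>A. x a) = N - 2"
      unfolding x_def using SQ cardAr by (simp add: sum.distrib)
    have S2: "(\<Sum>a\<in>A. (x a)^2) = N - 2"
    proof -
      have "(\<Sum>a\<in>A. (x a)^2) = (\<Sum>a\<in>A. 1 + 2 * Qh \<kappa> q a + (Qh \<kappa> q a)^2)"
        unfolding x_def by (rule sum.cong) (auto simp: power2_eq_square algebra_simps)
      also have "\<dots> = real (card A) + 2 * (\<Sum>a\<in>A. Qh \<kappa> q a) + (\<Sum>a\<in>A. (Qh \<kappa> q a)^2)"
        by (simp add: sum.distrib sum_distrib_left)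
      finally show ?thesis using SQ SQ2 cardAr N4 by simp
    qed
    define \<beta> where "\<beta> = 2*exp s - 2 - s*exp s"
    define \<gamma> where "\<gamma> = s*exp s - exp s + 1"
    have "(\<Sum>a\<in>A. exp (s * x a)) \<ge> (\<Sum>a\<in>A. 1 + \<beta> * x a + \<gamma> * (x a)^2)"
      by (rule sum_mono) (use key_exp[OF s0 xnn] in \<open>simp add: \<beta>_def \<gamma>_def\<close>)
    also have "(\<Sum>a\<in>A. 1 + \<beta> * x a + \<gamma> * (x a)^2) = real (card A) + \<beta> * (\<Sum>a\<in>A. x a) + \<gamma> * (\<Sum>a\<in>A. (x a)^2)"
      by (simp add: sum.distrib sum_distrib_left)
    also have "\<dots> = 1 + (N - 2) * exp s" unfolding S1 S2 cardAr \<beta>_def \<gamma>_def by (simp add: algebra_simps)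
    finally have ineq: "(\<Sum>a\<in>A. exp (s * (1 + Qh \<kappa> (qcheck \<kappa>) a))) \<le> (\<Sum>a\<in>A. exp (s * (1 + Qh \<kappa> q a)))"
      unfolding qc x_def .
    have "exp (real n * L) * (\<Sum>a\<in>A. exp (s * (1 + Qh \<kappa> (qcheck \<kappa>) a))) \<le> exp (real n * L) * (\<Sum>a\<in>A. exp (s * (1 + Qh \<kappa> q a)))"
      using ineq by (simp add: mult_left_mono)
    hence "P * (1 + exp (real n * L) * (\<Sum>a\<in>A. exp (s * (1 + Qh \<kappa> (qcheck \<kappa>) a)))) \<le> P * (1 + exp (real n * L) * (\<Sum>a\<in>A. exp (s * (1 + Qh \<kappa> q a))))"
      using P0 by (simp add: mult_left_mono)
    thus ?thesis unfolding lam[OF qsum] lam[OF s1] by simp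
  qed
  show ?thesis using qin main by blast
qed


end
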